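(* Let $q$ be a prime power, $k,m$ positive integers with $km$ even, $V=\mathbb F_{q^m}^k$, and let $U$ be a scattered $[\frac{km}{2},k]_{q^m/q}$ system. Then the following are equivalent: (1) $U$ is $(2,m-1)_q$-evasive; (2) $U^{\tau'}$ is a $\left(k-2,\frac{km}{2}-m-1\right)_q$-evasive $[\frac{km}{2},k]_{q^m/q}$ system; (3) $U^{\tau'}$ is a cutting $[\frac{km}{2},k]_{q^m/q}$ system.
   Context: An $[n,k]_{q^m/q}$ system is an $\mathbb F_q$-subspace $U$ of $\mathbb F_{q^m}^k$ with $\dim_{\mathbb F_q}(U)=n$ and $\langle U\rangle_{\mathbb F_{q^m}}=\mathbb F_{q^m}^k$. It is $(h,r)_q$-evasive if $\dim_{\mathbb F_q}(U\cap H)\le r$ for every $h$-dimensional $\mathbb F_{q^m}$-subspace $H$; scattered means $(1,1)_q$-evasive; cutting means $\langle H\cap U\rangle_{\mathbb F_{q^m}}=H$ for every $\mathbb F_{q^m}$-hyperplane $H$. Let $\sigma:V\times V\to\mathbb F_{q^m}$ be a nondegenerate $\mathbb F_{q^m}$-bilinear form and $\sigma'(u,v)=\mathrm{Tr}_{q^m/q}(\sigma(u,v))$, a nondegenerate $\mathbb F_q$-bilinear form on $V$ viewed as a $km$-dimensional $\mathbb F_q$-space. $U^{\tau'}$ denotes the orthogonal complement of $U$ with respect to $\sigma'$ (the dual of $U$). *)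

theory Defs
  imports "HOL-Analysis.Analysis"
begin

text \<open>Setting: the field type 'a plays the role of F_{q^m}; F is a subfield
  with q = card F elements and card UNIV = q^m.  V = 'a^'n with k = CARD('n).\<close>

definition is_subfield :: "'a::field set \<Rightarrow> bool" where
  "is_subfield F \<longleftrightarrow> 0 \<in> F \<and> 1 \<in> F \<and> (\<forall>x\<in>F. \<forall>y\<in>F. x + y \<in> F \<and> x * y \<in> F)
     \<and> (\<forall>x\<in>F. - x \<in> F \<and> inverse x \<in> F)"

text \<open>K-subspace of V, for a subfield K (K = F gives F_q-subspaces, K = UNIV gives F_{q^m}-subspaces).\<close>
definition subspace_over :: "'a::field set \<Rightarrow> ('a^'n) set \<Rightarrow> bool" where
  "subspace_over K U \<longleftrightarrow> 0 \<in> U \<and> (\<forall>x\<in>U. \<forall>y\<in>U. x + y \<in> U)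
     \<and> (\<forall>c\<in>K. \<forall>x\<in>U. c *s x \<in> U)"

definition span_over :: "'a::field set \<Rightarrow> ('a^'n) set \<Rightarrow> ('a^'n) set" where
  "span_over K S = {v. \<exists>T f. finite T \<and> T \<subseteq> S \<and> (\<forall>s\<in>T. f s \<in> K) \<and> v = (\<Sum>s\<in>T. f s *s s)}"

definition dim_over :: "'a::field set \<Rightarrow> ('a^'n) set \<Rightarrow> nat" where
  "dim_over K U = (LEAST n. \<exists>S. finite S \<and> S \<subseteq> U \<and> card S = n \<and> span_over K S = U)"

text \<open>[n,k]_{q^m/q} system (k = CARD('n)).\<close>
definition is_system :: "'a::field set \<Rightarrow> nat \<Rightarrow> ('a^'n) set \<Rightarrow> bool" where
  "is_system F n U \<longleftrightarrow> subspace_over F U \<and> dim_over F U = n \<and> span_over UNIV U = UNIV"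

definition evasive :: "'a::field set \<Rightarrow> int \<Rightarrow> int \<Rightarrow> ('a^'n) set \<Rightarrow> bool" where
  "evasive F h r U \<longleftrightarrow> (\<forall>H. subspace_over UNIV H \<and> int (dim_over UNIV H) = h
       \<longrightarrow> int (dim_over F (U \<inter> H)) \<le> r)"

definition scattered :: "'a::field set \<Rightarrow> ('a^'n) set \<Rightarrow> bool" where
  "scattered F U \<longleftrightarrow> evasive F 1 1 U"

definition cutting :: "'a::field set \<Rightarrow> ('a^'n) set \<Rightarrow> bool" where
  "cutting F U \<longleftrightarrow> (\<forall>H. subspace_over UNIV H \<and> dim_over UNIV H = CARD('n) - 1
       \<longrightarrow> span_over UNIV (H \<inter> U) = H)"

definition trace_over :: "'a::field set \<Rightarrow> nat \<Rightarrow> 'a \<Rightarrow> 'a" where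
  "trace_over F m x = (\<Sum>i<m. x ^ (card F ^ i))"

definition bilinear_form :: "('a^'n \<Rightarrow> 'a^'n \<Rightarrow> 'a::field) \<Rightarrow> bool" where
  "bilinear_form \<sigma> \<longleftrightarrow>
     (\<forall>x y z. \<sigma> (x + y) z = \<sigma> x z + \<sigma> y z \<and> \<sigma> z (x + y) = \<sigma> z x + \<sigma> z y)
   \<and> (\<forall>c x y. \<sigma> (c *s x) y = c * \<sigma> x y \<and> \<sigma> x (c *s y) = c * \<sigma> x y)"

definition nondegenerate_form :: "('a^'n \<Rightarrow> 'a^'n \<Rightarrow> 'a::field) \<Rightarrow> bool" where
  "nondegenerate_form \<sigma> \<longleftrightarrow> (\<forall>x. (\<forall>y. \<sigma> x y = 0) \<longrightarrow> x = 0) \<and> (\<forall>y. (\<forall>x. \<sigma> x y = 0) \<longrightarrow> y = 0)"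

text \<open>Dual U^{tau'}: orthogonal complement w.r.t. sigma'(u,v) = Tr(sigma(u,v)).\<close>
definition dual_system :: "'a::field set \<Rightarrow> nat \<Rightarrow> ('a^'n \<Rightarrow> 'a^'n \<Rightarrow> 'a) \<Rightarrow> ('a^'n) set \<Rightarrow> ('a^'n) set" where
  "dual_system F m \<sigma> U = {v. \<forall>u\<in>U. trace_over F m (\<sigma> u v) = 0}"

end

theory Submission imports Defs "HOL-Computational_Algebra.Computational_Algebra" "HOL-Number_Theory.Cong"
begin

lemma sf0: "is_subfield K \<Longrightarrow> 0 \<in> K" by (simp add: is_subfield_def)
lemma sf1: "is_subfield K \<Longrightarrow> 1 \<in> K" by (simp add: is_subfield_def)
lemma sfadd: "is_subfield K \<Longrightarrow> x \<in> K \<Longrightarrow> y \<in> K \<Longrightarrow> x + y \<in> K" by (simp add: is_subfield_def)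
lemma sfmult: "is_subfield K \<Longrightarrow> x \<in> K \<Longrightarrow> y \<in> K \<Longrightarrow> x * y \<in> K" by (simp add: is_subfield_def)
lemma sfneg: "is_subfield K \<Longrightarrow> x \<in> K \<Longrightarrow> - x \<in> K" by (simp add: is_subfield_def)
lemma sfinv: "is_subfield K \<Longrightarrow> x \<in> K \<Longrightarrow> inverse x \<in> K" by (simp add: is_subfield_def)
lemma sfdiff: "is_subfield K \<Longrightarrow> x \<in> K \<Longrightarrow> y \<in> K \<Longrightarrow> x - y \<in> K"
  by (metis sfadd sfneg diff_conv_add_uminus)
lemma sfdiv: "is_subfield K \<Longrightarrow> x \<in> K \<Longrightarrow> y \<in> K \<Longrightarrow> x / y \<in> K"
  by (metis sfmult sfinv divide_inverse)
lemma sfUNIV: "is_subfield (UNIV :: 'a::field set)" by (simp add: is_subfield_def)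

section \<open>Spans and subspaces\<close>

lemma vsum_smult: "(c::'a::field) *s sum f A = sum (\<lambda>x. c *s f x) A"
  by (induction A rule: infinite_finite_induct) (auto simp: vector_add_ldistrib)

lemma span_over_fin:
  assumes "0 \<in> K"
  shows "span_over K (S :: ('a::{field,finite}^'n) set) = {v. \<exists>g. (\<forall>s\<in>S. g s \<in> K) \<and> v = (\<Sum>s\<in>S. g s *s s)}" (is "_ = ?R")
proof
  show "span_over K S \<subseteq> ?R"
  proof
    fix v assume "v \<in> span_over K S"
    then obtain T f where T: "finite T" "T \<subseteq> S" "\<forall>s\<in>T. f s \<in> K" "v = (\<Sum>s\<in>T. f s *s s)"
      unfolding span_over_def by blast
    define g where "g s = (if s \<in> T then f s else 0)" for s
    have "(\<Sum>s\<in>S. g s *s s) = (\<Sum>s\<in>T. g s *s s)"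
      by (rule sum.mono_neutral_right) (use T in \<open>auto simp: g_def\<close>)
    also have "\<dots> = v" using T by (simp add: g_def)
    finally show "v \<in> ?R"
      using T assms by (auto simp: g_def intro!: exI[of _ g])
  qed
next
  show "?R \<subseteq> span_over K S"
    unfolding span_over_def by auto
qed

lemma sum_in_subspace:
  assumes "subspace_over K U" "\<forall>t\<in>T. h t \<in> U"
  shows "sum h T \<in> U"
  using assms(2)
proof (induction T rule: infinite_finite_induct)
  case (insert x F) thus ?case using assms(1) by (simp add: subspace_over_def)
qed (use assms(1) in \<open>auto simp: subspace_over_def\<close>)

lemma subspace_neg: "is_subfield K \<Longrightarrow> subspace_over K U \<Longrightarrow> x \<in> U \<Longrightarrow> - x \<in> U"
  by (metis subspace_over_def sf1 sfneg vector_sneg_minus1)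

lemma subspace_diff: "is_subfield K \<Longrightarrow> subspace_over K U \<Longrightarrow> x \<in> U \<Longrightarrow> y \<in> U \<Longrightarrow> x - y \<in> U"
  by (metis subspace_over_def subspace_neg diff_conv_add_uminus)

lemma span_subspace:
  fixes S :: "('a::{field,finite}^'n) set"
  assumes K: "is_subfield K"
  shows "subspace_over K (span_over K S)"
proof -
  have sp: "span_over K S = {v. \<exists>g. (\<forall>s\<in>S. g s \<in> K) \<and> v = (\<Sum>s\<in>S. g s *s s)}"
    by (rule span_over_fin[OF sf0[OF K]])
  have A: "0 \<in> span_over K S" unfolding sp
  proof (intro CollectI exI conjI)
    show "\<forall>s\<in>S. (\<lambda>_. 0) s \<in> K" using sf0[OF K] by simp
  qed simp
  have B: "x + y \<in> span_over K S" if hx: "x \<in> span_over K S" and hy: "y \<in> span_over K S" for x y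
  proof -
    obtain g1 where g1: "\<forall>s\<in>S. g1 s \<in> K" "x = (\<Sum>s\<in>S. g1 s *s s)" using hx unfolding sp by blast
    obtain g2 where g2: "\<forall>s\<in>S. g2 s \<in> K" "y = (\<Sum>s\<in>S. g2 s *s s)" using hy unfolding sp by blast
    have "x + y = (\<Sum>s\<in>S. (g1 s + g2 s) *s s)"
      unfolding g1(2) g2(2) by (simp add: vector_sadd_rdistrib sum.distrib)
    moreover have "\<forall>s\<in>S. g1 s + g2 s \<in> K" using g1 g2 sfadd[OF K] by blast
    ultimately show ?thesis unfolding sp by (intro CollectI exI[of _ "\<lambda>s. g1 s + g2 s"]) simp
  qed
  have C: "c *s x \<in> span_over K S" if hc: "c \<in> K" and hx: "x \<in> span_over K S" for c x
  proof -
    obtain g1 where g1: "\<forall>s\<in>S. g1 s \<in> K" "x = (\<Sum>s\<in>S. g1 s *s s)" using hx unfolding sp by blast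
    have "c *s x = (\<Sum>s\<in>S. (c * g1 s) *s s)"
      unfolding g1(2) by (simp add: vsum_smult vector_smult_assoc)
    moreover have "\<forall>s\<in>S. c * g1 s \<in> K" using g1 sfmult[OF K] hc by blast
    ultimately show ?thesis unfolding sp by (intro CollectI exI[of _ "\<lambda>s. c * g1 s"]) simp
  qed
  show ?thesis unfolding subspace_over_def using A B C by blast
qed

lemma span_sup:
  fixes S :: "('a::{field,finite}^'n) set"
  assumes K: "is_subfield K"
  shows "S \<subseteq> span_over K S"
proof
  fix x assume x: "x \<in> S"
  have "{x} \<subseteq> S" "\<forall>s\<in>{x}. (\<lambda>_. 1) s \<in> K" "x = (\<Sum>s\<in>{x}. (\<lambda>_. 1) s *s s)"
    using x sf1[OF K] by auto
  thus "x \<in> span_over K S" unfolding span_over_def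
    by (intro CollectI exI[of _ "{x}"] exI[of _ "\<lambda>_. 1"]) auto
qed

lemma span_least:
  fixes S :: "('a::{field,finite}^'n) set"
  assumes K: "is_subfield K" and U: "subspace_over K U" and S: "S \<subseteq> U"
  shows "span_over K S \<subseteq> U"
proof
  fix v assume "v \<in> span_over K S"
  then obtain g where g: "\<forall>s\<in>S. g s \<in> K" and v: "v = (\<Sum>s\<in>S. g s *s s)"
    unfolding span_over_fin[OF sf0[OF K]] by auto
  have "g t *s t \<in> U" if "t \<in> S" for t
    using S U g that unfolding subspace_over_def by auto
  hence "(\<Sum>s\<in>S. g s *s s) \<in> U" by (intro sum_in_subspace[OF U]) auto
  thus "v \<in> U" using v by simp
qed

lemma span_self:
  fixes U :: "('a::{field,finite}^'n) set"
  assumes K: "is_subfield K" and U: "subspace_over K U"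
  shows "span_over K U = U"
  using span_least[OF K U] span_sup[OF K] by blast

section \<open>Cardinality of subspaces\<close>

lemma card_subspace:
  fixes U :: "('a::{field,finite}^'n) set"
  assumes K: "is_subfield K" and U: "subspace_over K U"
  shows "card U = card K ^ dim_over K U"
proof -
  let ?P = "\<lambda>n. \<exists>S. finite S \<and> S \<subseteq> U \<and> card S = n \<and> span_over K S = U"
  have ex: "?P (card U)" using span_self[OF K U] by auto
  have "?P (dim_over K U)" unfolding dim_over_def by (rule LeastI[of ?P, OF ex])
  then obtain S where S: "S \<subseteq> U" "card S = dim_over K U" "span_over K S = U" by auto
  have min: "dim_over K U \<le> card S'" if "S' \<subseteq> U" "span_over K S' = U" for S'
    unfolding dim_over_def by (rule Least_le) (use that in auto)
  define \<Phi> where "\<Phi> g = (\<Sum>s\<in>S. g s *s s)" for g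
  have inj: "inj_on \<Phi> (S \<rightarrow>\<^sub>E K)"
  proof (rule inj_onI, rule ccontr)
    fix g1 g2 assume g1: "g1 \<in> S \<rightarrow>\<^sub>E K" and g2: "g2 \<in> S \<rightarrow>\<^sub>E K" and eq: "\<Phi> g1 = \<Phi> g2" and ne: "g1 \<noteq> g2"
    obtain s0 where s0: "s0 \<in> S" "g1 s0 \<noteq> g2 s0"
      using ne PiE_ext[OF g1 g2] by blast
    define d where "d s = g1 s - g2 s" for s
    have dK: "d s \<in> K" if "s \<in> S" for s using g1 g2 sfdiff[OF K] that unfolding d_def by auto
    have "(\<Sum>s\<in>S. d s *s s) = \<Phi> g1 - \<Phi> g2"
      by (simp add: d_def \<Phi>_def vector_sub_rdistrib sum_subtractf)
    hence sum0: "(\<Sum>s\<in>S. d s *s s) = 0" using eq by simp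
    have d0: "d s0 \<noteq> 0" using s0 by (simp add: d_def)
    have "(\<Sum>s\<in>S. d s *s s) = d s0 *s s0 + (\<Sum>s\<in>S-{s0}. d s *s s)"
      using s0 by (simp add: sum.remove)
    hence e1: "d s0 *s s0 = - (\<Sum>s\<in>S-{s0}. d s *s s)" using sum0 by (simp add: eq_neg_iff_add_eq_0)
    have "s0 = inverse (d s0) *s (d s0 *s s0)" using d0 by (simp add: vector_smult_assoc)
    also have "\<dots> = inverse (d s0) *s (- (\<Sum>s\<in>S-{s0}. d s *s s))" using e1 by simp
    also have "\<dots> = (\<Sum>s\<in>S-{s0}. (- d s / d s0) *s s)"
      by (simp add: vector_smult_rneg vsum_smult vector_smult_assoc divide_inverse mult.commute
          flip: sum_negf)
    finally have s0eq: "s0 = (\<Sum>s\<in>S-{s0}. (- d s / d s0) *s s)" .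
    have "\<forall>s\<in>S-{s0}. - d s / d s0 \<in> K" using dK s0 sfdiv[OF K] sfneg[OF K] by auto
    hence "s0 \<in> span_over K (S - {s0})"
      unfolding span_over_fin[OF sf0[OF K]] using s0eq
      by (intro CollectI exI[of _ "\<lambda>s. - d s / d s0"]) simp
    hence "S \<subseteq> span_over K (S - {s0})" using span_sup[OF K, of "S - {s0}"] by auto
    hence "span_over K S \<subseteq> span_over K (S - {s0})"
      by (rule span_least[OF K span_subspace[OF K]])
    moreover have "span_over K (S - {s0}) \<subseteq> U"
      using span_least[OF K U, of "S - {s0}"] S by auto
    ultimately have "span_over K (S - {s0}) = U" using S by auto
    hence "dim_over K U \<le> card (S - {s0})" using min[of "S - {s0}"] S(1) by auto
    moreover have "card S > 0" using s0 card_gt_0_iff by fastforce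
    ultimately show False using S s0 by simp
  qed
  have img: "\<Phi> ` (S \<rightarrow>\<^sub>E K) = U"
  proof
    show "\<Phi> ` (S \<rightarrow>\<^sub>E K) \<subseteq> U"
      using S(3) unfolding span_over_fin[OF sf0[OF K]] \<Phi>_def by (auto simp: PiE_def)
  next
    show "U \<subseteq> \<Phi> ` (S \<rightarrow>\<^sub>E K)"
    proof
      fix v assume "v \<in> U"
      then obtain g where g: "\<forall>s\<in>S. g s \<in> K" "v = (\<Sum>s\<in>S. g s *s s)"
        using S(3) unfolding span_over_fin[OF sf0[OF K]] by auto
      have "restrict g S \<in> S \<rightarrow>\<^sub>E K" using g by auto
      moreover have "\<Phi> (restrict g S) = v" unfolding \<Phi>_def g(2) by (rule sum.cong) auto
      ultimately show "v \<in> \<Phi> ` (S \<rightarrow>\<^sub>E K)" by blast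
    qed
  qed
  have "card U = card (S \<rightarrow>\<^sub>E K)" using card_image[OF inj] img by simp
  also have "\<dots> = card K ^ card S" by (simp add: card_PiE)
  finally show ?thesis using S by simp
qed

section \<open>Finite field facts\<close>

lemma subfield_pow_card:
  fixes K :: "'a::{field,finite} set"
  assumes K: "is_subfield K" and a: "a \<in> K"
  shows "a ^ card K = a"
proof (cases "a = 0")
  case True
  have "card K > 0" using sf0[OF K] card_gt_0_iff by fastforce
  thus ?thesis using True by simp
next
  case False
  have fin: "finite (K - {0})" by simp
  have "(\<Prod>y\<in>K-{0}. a * y) = (\<Prod>y\<in>K-{0}. y)"
    by (rule prod.reindex_bij_witness[of _ "\<lambda>y. y / a" "\<lambda>y. a * y"])
       (use False a K in \<open>auto simp: sfdiv sfmult\<close>)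
  moreover have "(\<Prod>y\<in>K-{0}. a * y) = a ^ card (K - {0}) * (\<Prod>y\<in>K-{0}. y)"
    by (simp add: prod.distrib)
  moreover have "(\<Prod>y\<in>K-{0}. y) \<noteq> 0" by simp
  ultimately have "a ^ card (K - {0}) = 1" by simp
  moreover have "card K = Suc (card (K - {0}))"
    using sf0[OF K] by (metis card_Suc_Diff1 finite)
  ultimately show ?thesis by simp
qed

lemma pow_card_UNIV: "(x::'a::{field,finite}) ^ card (UNIV :: 'a set) = x"
  using subfield_pow_card[OF sfUNIV] by simp

lemma CHAR_prime_fin: "prime CHAR('a::{field,finite})"
  by (rule prime_CHAR_semidom) (rule finite_imp_CHAR_pos, simp)

lemma range_of_nat_subfield: "is_subfield (range (of_nat :: nat \<Rightarrow> 'a::{field,finite}))"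
proof -
  let ?P = "range (of_nat :: nat \<Rightarrow> 'a)"
  have cp: "CHAR('a) > 0" by (rule finite_imp_CHAR_pos) simp
  have neg: "- x \<in> ?P" if "x \<in> ?P" for x
  proof -
    obtain a where a: "x = of_nat a" using \<open>x \<in> ?P\<close> by auto
    have "of_nat ((CHAR('a) - 1) * a) + (of_nat a :: 'a) = of_nat (CHAR('a) * a)"
      using cp by (simp flip: of_nat_add add: algebra_simps)
    also have "\<dots> = 0" by simp
    finally have "- x = of_nat ((CHAR('a) - 1) * a)" using a by (metis add.commute neg_eq_iff_add_eq_0)
    thus ?thesis by (metis rangeI)
  qed
  have inv: "inverse x \<in> ?P" if "x \<in> ?P" for x
  proof (cases "x = 0")
    case True thus ?thesis by (metis inverse_zero of_nat_0 rangeI)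
  next
    case False
    obtain a where a: "x = of_nat a" using \<open>x \<in> ?P\<close> by auto
    have c2: "card (UNIV :: 'a set) \<ge> 2"
    proof -
      show ?thesis using card_mono[of "UNIV::'a set" "{0,1::'a}"] by simp
    qed
    have "x * x ^ (card (UNIV :: 'a set) - 2) = x ^ (Suc (card (UNIV :: 'a set) - 2))" by simp
    also have "Suc (card (UNIV :: 'a set) - 2) = card (UNIV :: 'a set) - 1" using c2 by simp
    finally have "x * x ^ (card (UNIV :: 'a set) - 2) = x ^ (card (UNIV :: 'a set) - 1)" .
    moreover have "x * x ^ (card (UNIV :: 'a set) - 1) = x * 1"
      using pow_card_UNIV[of x] c2 by (metis power_Suc Suc_diff_1 mult_1_right not_numeral_le_zero le0 neq0_conv)
    hence "x ^ (card (UNIV :: 'a set) - 1) = 1" using False by simp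
    ultimately have "inverse x = x ^ (card (UNIV :: 'a set) - 2)" using False
      by (metis field_class.field_inverse mult.commute inverse_unique)
    thus ?thesis using a by (simp flip: of_nat_power)
  qed
  show ?thesis unfolding is_subfield_def
    by (auto simp flip: of_nat_add of_nat_mult intro: neg inv) (metis of_nat_0 rangeI, metis of_nat_1 rangeI)
qed

lemma card_range_of_nat: "card (range (of_nat :: nat \<Rightarrow> 'a::{field,finite})) = CHAR('a)"
proof -
  have cp: "CHAR('a) > 0" by (rule finite_imp_CHAR_pos) simp
  have "range (of_nat :: nat \<Rightarrow> 'a) = of_nat ` {..<CHAR('a)}"
  proof
    show "range (of_nat :: nat \<Rightarrow> 'a) \<subseteq> of_nat ` {..<CHAR('a)}"
    proof
      fix x assume "x \<in> range (of_nat :: nat \<Rightarrow> 'a)"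
      then obtain n where n: "x = of_nat n" by auto
      have "(of_nat n :: 'a) = of_nat (n mod CHAR('a))"
        by (simp add: of_nat_eq_iff_cong_CHAR cong_def)
      moreover have "n mod CHAR('a) < CHAR('a)" using cp by simp
      ultimately show "x \<in> of_nat ` {..<CHAR('a)}" using n by blast
    qed
  qed auto
  moreover have "inj_on (of_nat :: nat \<Rightarrow> 'a) {..<CHAR('a)}"
    by (rule inj_onI) (auto simp: of_nat_eq_iff_cong_CHAR cong_less_modulus_unique_nat)
  ultimately show ?thesis by (simp add: card_image)
qed

lemma subfield_card_CHAR_pow:
  fixes F :: "'a::{field,finite} set"
  assumes F: "is_subfield F"
  shows "\<exists>e. card F = CHAR('a) ^ e"
proof -
  let ?P = "range (of_nat :: nat \<Rightarrow> 'a)"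
  have PF: "?P \<subseteq> F"
  proof
    fix x assume "x \<in> ?P"
    then obtain n where n: "x = of_nat n" by auto
    have "(of_nat n :: 'a) \<in> F" by (induction n) (auto simp: sf0[OF F] sf1[OF F] sfadd[OF F])
    thus "x \<in> F" using n by simp
  qed
  define U1 where "U1 = {v :: 'a^1. v$1 \<in> F}"
  have sub: "subspace_over ?P U1"
    unfolding subspace_over_def U1_def using sf0[OF F] sfadd[OF F] sfmult[OF F] PF by (auto simp: subset_iff)
  have "card U1 = card ?P ^ dim_over ?P U1"
    by (rule card_subspace[OF range_of_nat_subfield sub])
  moreover have "U1 = vec ` F"
  proof
    show "U1 \<subseteq> vec ` F"
    proof
      fix v assume "v \<in> U1"
      hence "v = vec (v$1)" "v$1 \<in> F" by (auto simp: U1_def vec_eq_iff)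
      thus "v \<in> vec ` F" by blast
    qed
  qed (auto simp: U1_def)
  moreover have "inj (vec :: 'a \<Rightarrow> 'a^1)" by (rule injI) (simp add: vec_eq_iff)
  ultimately have "card F = CHAR('a) ^ dim_over ?P U1"
    by (simp add: card_image inj_on_subset card_range_of_nat)
  thus ?thesis by blast
qed

section \<open>Trace\<close>

locale fsetting =
  fixes F :: "'a::{field,finite} set" and m :: nat
  assumes F: "is_subfield F" and cardU: "card (UNIV::'a set) = card F ^ m" and m0: "m > 0"
begin

abbreviation "q \<equiv> card F"
abbreviation "tr \<equiv> trace_over F m"

lemma q_ge2: "q \<ge> 2"
proof -
  have "{0,1} \<subseteq> F" using sf0[OF F] sf1[OF F] by auto
  thus ?thesis using card_mono[of F "{0,1}"] by simp
qed

lemma q_pow: "\<exists>e. q = CHAR('a) ^ e"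
  using subfield_card_CHAR_pow[OF F] by blast

lemma frob: "(x + y) ^ (q ^ i) = x ^ (q ^ i) + (y::'a) ^ (q ^ i)"
proof -
  obtain e where e: "q = CHAR('a) ^ e" using q_pow by blast
  show ?thesis
    by (rule freshmans_dream'[OF CHAR_prime_fin, of _ "e * i"]) (simp add: e power_mult)
qed

lemma frob_sum: "(sum f A) ^ (q ^ i) = (\<Sum>x\<in>A. (f x :: 'a) ^ (q ^ i))"
proof -
  obtain e where e: "q = CHAR('a) ^ e" using q_pow by blast
  show ?thesis
    by (rule freshmans_dream_sum'[OF CHAR_prime_fin, of _ "e * i"]) (simp add: e power_mult)
qed

lemma F_pow: "a \<in> F \<Longrightarrow> a ^ (q ^ i) = a"
proof (induction i)
  case (Suc i)
  have "a ^ (q ^ Suc i) = (a ^ (q ^ i)) ^ q" by (simp add: power_mult mult.commute flip: power_mult)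
  thus ?case using Suc subfield_pow_card[OF F] by simp
qed simp

lemma tr_add: "tr (x + y) = tr x + tr y"
  unfolding trace_over_def by (simp add: frob sum.distrib)

lemma tr_smult: "a \<in> F \<Longrightarrow> tr (a * x) = a * tr x"
  unfolding trace_over_def by (simp add: power_mult_distrib F_pow sum_distrib_left)

lemma tr_pow: "tr x ^ q = tr x"
proof -
  define f where "f i = x ^ (q ^ i)" for i
  have "tr x ^ q = tr x ^ (q ^ 1)" by simp
  also have "\<dots> = (\<Sum>i<m. f (Suc i))"
    unfolding trace_over_def frob_sum f_def by (simp add: power_mult mult.commute flip: power_mult)
  finally have 1: "tr x ^ q = (\<Sum>i<m. f (Suc i))" .
  have 2: "(\<Sum>i<Suc m. f i) = f 0 + (\<Sum>i<m. f (Suc i))" by (rule sum.lessThan_Suc_shift)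
  have 3: "(\<Sum>i<Suc m. f i) = (\<Sum>i<m. f i) + f m" by simp
  have "f m = x" using pow_card_UNIV[of x] cardU by (simp add: f_def)
  moreover have "f 0 = x" by (simp add: f_def)
  ultimately have "(\<Sum>i<m. f (Suc i)) = (\<Sum>i<m. f i)" using 2 3 by (metis add.commute add_left_cancel)
  thus ?thesis using 1 unfolding trace_over_def f_def by simp
qed

lemma roots_F: "{y::'a. y ^ q = y} = F"
proof -
  define p where "p = (monom (1::'a) q - [:0, 1:])"
  have ev: "poly p y = y ^ q - y" for y by (simp add: p_def poly_monom)
  have "coeff p q = 1" using q_ge2 by (simp add: p_def coeff_pCons split: nat.split)
  hence p0: "p \<noteq> 0" by auto
  have "degree p \<le> q"
    by (rule degree_le) (use q_ge2 in \<open>auto simp: p_def coeff_pCons split: nat.split\<close>)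
  hence c: "card {y. poly p y = 0} \<le> q" using card_poly_roots_bound[OF p0] by simp
  have "{y::'a. y ^ q = y} = {y. poly p y = 0}" by (simp add: ev)
  moreover have "F \<subseteq> {y::'a. y ^ q = y}" using subfield_pow_card[OF F] by auto
  ultimately show ?thesis using c by (metis card_seteq finite)
qed

lemma tr_in_F: "tr x \<in> F"
  using tr_pow[of x] roots_F by auto

lemma tr_nonzero: "\<exists>t. tr t \<noteq> 0"
proof (rule ccontr)
  assume "\<not> (\<exists>t. tr t \<noteq> 0)"
  hence z: "tr t = 0" for t by auto
  define p where "p = (\<Sum>i<m. monom (1::'a) (q ^ i))"
  have ev: "poly p y = tr y" for y by (simp add: p_def poly_sum poly_monom trace_over_def)
  have inj: "q ^ i = q ^ j \<longleftrightarrow> i = j" for i j using q_ge2 by (simp add: power_inject_exp)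
  have "coeff p (q ^ (m - 1)) = (\<Sum>i<m. if q ^ i = q ^ (m - 1) then 1 else 0)"
    by (simp add: p_def coeff_sum)
  also have "\<dots> = (\<Sum>i\<in>{m-1}. 1)"
    by (rule sum.mono_neutral_cong_right) (use m0 inj in auto)
  finally have "coeff p (q ^ (m - 1)) = 1" by simp
  hence p0: "p \<noteq> 0" by auto
  have "degree p \<le> q ^ (m - 1)"
  proof (rule degree_le, intro allI impI)
    fix n assume n: "q ^ (m - 1) < n"
    have "q ^ i \<noteq> n" if "i < m" for i
    proof -
      have "q ^ i \<le> q ^ (m - 1)" using that q_ge2 by (intro power_increasing) auto
      thus ?thesis using n by auto
    qed
    thus "coeff p n = 0" by (simp add: p_def coeff_sum)
  qed
  moreover have "q ^ (m - 1) < q ^ m" using q_ge2 m0 by (intro power_strict_increasing) auto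
  ultimately have "degree p < card (UNIV :: 'a set)" using cardU by simp
  moreover have "{y. poly p y = 0} = UNIV" using ev z by auto
  ultimately show False using card_poly_roots_bound[OF p0] by simp
qed

end

lemma fibre_count:
  assumes "finite X" "finite Y" "f ` X \<subseteq> Y" "\<And>y. y \<in> Y \<Longrightarrow> card {x\<in>X. f x = y} = c"
  shows "card X = card Y * c"
proof -
  have "card X = (\<Sum>x\<in>X. 1)" by simp
  also have "\<dots> = (\<Sum>y\<in>Y. (\<Sum>x\<in>{x. x \<in> X \<and> f x = y}. 1))"
    by (rule sum.group[symmetric]) (use assms in auto)
  also have "\<dots> = (\<Sum>y\<in>Y. c)" using assms(4) by simp
  finally show ?thesis by simp
qed

lemma subspace_smult: "subspace_over K U \<Longrightarrow> c \<in> K \<Longrightarrow> x \<in> U \<Longrightarrow> c *s x \<in> U"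
  by (simp add: subspace_over_def)
lemma subspace_add: "subspace_over K U \<Longrightarrow> x \<in> U \<Longrightarrow> y \<in> U \<Longrightarrow> x + y \<in> U"
  by (simp add: subspace_over_def)
lemma subspace_0: "subspace_over K U \<Longrightarrow> 0 \<in> U"
  by (simp add: subspace_over_def)

lemma ker_count:
  fixes A :: "('a::{field,finite}^'n) set"
  assumes K: "is_subfield K" and A: "subspace_over K A"
    and add: "\<And>x y. x \<in> A \<Longrightarrow> y \<in> A \<Longrightarrow> f (x + y) = f x + f y"
    and sm: "\<And>c x. c \<in> K \<Longrightarrow> x \<in> A \<Longrightarrow> f (c *s x) = c * f x"
    and inK: "\<And>x. x \<in> A \<Longrightarrow> f x \<in> K"
    and a0: "a0 \<in> A" "f a0 \<noteq> 0"
  shows "card A = card K * card {x\<in>A. f x = 0}"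
proof (rule fibre_count)
  show "f ` A \<subseteq> K" using inK by auto
  fix t assume t: "t \<in> K"
  define xt where "xt = (t / f a0) *s a0"
  have xtA: "xt \<in> A" unfolding xt_def by (rule subspace_smult[OF A sfdiv[OF K t inK[OF a0(1)]] a0(1)])
  have fxt: "f xt = t" using sm[OF sfdiv[OF K t inK[OF a0(1)]] a0(1)] a0(2) unfolding xt_def by simp
  have "{x\<in>A. f x = t} = (\<lambda>z. xt + z) ` {x\<in>A. f x = 0}"
  proof
    show "{x\<in>A. f x = t} \<subseteq> (\<lambda>z. xt + z) ` {x\<in>A. f x = 0}"
    proof
      fix x assume x: "x \<in> {x\<in>A. f x = t}"
      have m: "- xt \<in> A" using subspace_neg[OF K A xtA] .
      have d: "x - xt \<in> A" using subspace_diff[OF K A _ xtA] x by blast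
      have "f (x + - xt) = f x + f (- xt)" using add[of x "- xt"] x m by blast
      moreover have "f (- xt) = - f xt"
        proof -
        have "- xt = (-1) *s xt" by (rule vector_sneg_minus1)
        hence "f (- xt) = (-1) * f xt" using sm[OF sfneg[OF K sf1[OF K]] xtA] by simp
        thus ?thesis by simp
      qed
      ultimately have "f (x - xt) = 0" using x fxt by simp
      hence "x - xt \<in> {x\<in>A. f x = 0}" using d by blast
      moreover have "x = xt + (x - xt)" by simp
      ultimately show "x \<in> (\<lambda>z. xt + z) ` {x\<in>A. f x = 0}" by (rule rev_image_eqI)
    qed
  next
    show "(\<lambda>z. xt + z) ` {x\<in>A. f x = 0} \<subseteq> {x\<in>A. f x = t}"
    proof
      fix y assume "y \<in> (\<lambda>z. xt + z) ` {x\<in>A. f x = 0}"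
      then obtain z where z: "z \<in> A" "f z = 0" "y = xt + z" by blast
      have "xt + z \<in> A" using subspace_add[OF A xtA z(1)] .
      moreover have "f (xt + z) = t" using add[OF xtA z(1)] fxt z(2) by simp
      ultimately show "y \<in> {x\<in>A. f x = t}" using z(3) by blast
    qed
  qed
  moreover have "inj_on (\<lambda>z. xt + z) {x\<in>A. f x = 0}" by (rule inj_onI) simp
  ultimately show "card {x\<in>A. f x = t} = card {x\<in>A. f x = 0}" by (simp add: card_image)
qed simp_all


section \<open>Pairings\<close>

lemma arith_aux:
  fixes U V R q :: nat
  assumes "(U - 1) * V + q * V = (V - R) * U + R * (q * U)" "R \<le> V" "U \<ge> 1" "q \<ge> 2"
  shows "R * U = V"
proof -
  have "int ((U - 1) * V + q * V) = int ((V - R) * U + R * (q * U))" using assms(1) by simp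
  hence "(int U - 1) * int V + int q * int V = (int V - int R) * int U + int R * (int q * int U)"
    using assms(2,3) by (simp add: of_nat_diff)
  hence "(int q - 1) * int V = (int q - 1) * (int R * int U)" by (simp add: algebra_simps)
  hence "int V = int R * int U" using assms(4) by simp
  thus ?thesis by (metis of_nat_eq_iff of_nat_mult)
qed

definition Rp :: "('v \<Rightarrow> 'v \<Rightarrow> 'a::zero) \<Rightarrow> 'v set \<Rightarrow> 'v set" where
  "Rp b X = {v. \<forall>u\<in>X. b u v = 0}"

locale pairing =
  fixes F :: "'a::{field,finite} set" and b :: "'a^'n \<Rightarrow> 'a^'n \<Rightarrow> 'a"
  assumes F: "is_subfield F"
    and addL: "b (x + y) z = b x z + b y z"
    and addR: "b z (x + y) = b z x + b z y"
    and smL: "c \<in> F \<Longrightarrow> b (c *s x) y = c * b x y"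
    and smR: "c \<in> F \<Longrightarrow> b x (c *s y) = c * b x y"
    and inF: "b x y \<in> F"
    and ndL: "x \<noteq> 0 \<Longrightarrow> \<exists>y. b x y \<noteq> 0"
    and ndR: "y \<noteq> 0 \<Longrightarrow> \<exists>x. b x y \<noteq> 0"
    and swap: "b (c *s x) y = b x (c *s y)"
begin

abbreviation R where "R \<equiv> Rp b"

lemma b0L: "b 0 y = 0"
  using addL[of 0 0 y] by (metis add.right_neutral add_left_cancel add_0)

lemma b0R: "b x 0 = 0"
  using addR[of x 0 0] by (metis add.right_neutral add_left_cancel add_0)

lemma R_sub: "subspace_over F (R X)"
  unfolding subspace_over_def Rp_def by (auto simp: b0R addR smR)

lemma R_subU: "subspace_over UNIV X \<Longrightarrow> subspace_over UNIV (R X)"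
  unfolding subspace_over_def Rp_def by (auto simp: b0R addR simp flip: swap)

lemma R_anti: "X \<subseteq> Y \<Longrightarrow> R Y \<subseteq> R X"
  unfolding Rp_def by auto

lemma UNIV_sub: "subspace_over F (UNIV :: ('a^'n) set)"
  by (simp add: subspace_over_def)

lemma R_card:
  assumes U: "subspace_over F U"
  shows "card (R U) * card U = card (UNIV :: ('a^'n) set)"
proof -
  let ?V = "card (UNIV :: ('a^'n) set)"
  let ?q = "card F"
  have q2: "?q \<ge> 2"
  proof -
    have "{0,1} \<subseteq> F" using sf0[OF F] sf1[OF F] by auto
    thus ?thesis using card_mono[of F "{0,1}"] by simp
  qed
  have U0: "0 \<in> U" using subspace_0[OF U] .
  define Z where "Z = Sigma U (\<lambda>u. {v. b u v = 0})"
  define Z' where "Z' = Sigma UNIV (\<lambda>v. {u\<in>U. b u v = 0})"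
  have cZ: "card Z = (\<Sum>u\<in>U. card {v. b u v = 0})" unfolding Z_def by simp
  have cZ': "card Z' = (\<Sum>v\<in>UNIV. card {u\<in>U. b u v = 0})" unfolding Z'_def by simp
  have "Z' = (\<lambda>(u,v). (v,u)) ` Z" unfolding Z_def Z'_def by auto
  moreover have "inj_on (\<lambda>(u,v). (v,u)) Z" by (rule inj_onI) auto
  ultimately have ZZ: "card Z' = card Z" by (simp add: card_image)
  have ku: "?q * card {v. b u v = 0} = ?V" if "u \<in> U" "u \<noteq> 0" for u
  proof -
    obtain y where y: "b u y \<noteq> 0" using ndL[OF \<open>u \<noteq> 0\<close>] by blast
    have "card (UNIV :: ('a^'n) set) = ?q * card {x\<in>UNIV. b u x = 0}"
      by (rule ker_count[OF F UNIV_sub, of "b u" y]) (use y in \<open>auto simp: addR smR inF\<close>)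
    thus ?thesis by simp
  qed
  have "?q * card Z = (\<Sum>u\<in>U. ?q * card {v. b u v = 0})" unfolding cZ by (simp add: sum_distrib_left)
  also have "\<dots> = (\<Sum>u\<in>U-{0}. ?q * card {v. b u v = 0}) + ?q * card {v. b 0 v = 0}"
    using U0 by (simp add: sum.remove add.commute)
  also have "(\<Sum>u\<in>U-{0}. ?q * card {v. b u v = 0}) = (\<Sum>u\<in>U-{0}. ?V)"
    by (rule sum.cong) (auto simp: ku)
  also have "{v. b 0 v = 0} = UNIV" by (auto simp: b0L)
  finally have e1: "?q * card Z = (card U - 1) * ?V + ?q * ?V"
    using U0 by (simp add: card_Diff_singleton)
  have kv: "card U = ?q * card {u\<in>U. b u v = 0}" if hv: "v \<notin> R U" for v
  proof -
    obtain u0 where u0: "u0 \<in> U" "b u0 v \<noteq> 0" using hv unfolding Rp_def by auto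
    show ?thesis
      by (rule ker_count[OF F U, of "\<lambda>u. b u v" u0]) (use u0 in \<open>auto simp: addL smL inF\<close>)
  qed
  have kv': "{u\<in>U. b u v = 0} = U" if "v \<in> R U" for v using that unfolding Rp_def by auto
  have "?q * card Z' = (\<Sum>v\<in>UNIV. ?q * card {u\<in>U. b u v = 0})" unfolding cZ' by (simp add: sum_distrib_left)
  also have "\<dots> = (\<Sum>v\<in>UNIV - R U. ?q * card {u\<in>U. b u v = 0}) + (\<Sum>v\<in>R U. ?q * card {u\<in>U. b u v = 0})"
    by (rule sum.subset_diff) auto
  also have "(\<Sum>v\<in>UNIV - R U. ?q * card {u\<in>U. b u v = 0}) = (\<Sum>v\<in>UNIV - R U. card U)"
    by (rule sum.cong) (auto simp: kv)
  also have "(\<Sum>v\<in>R U. ?q * card {u\<in>U. b u v = 0}) = (\<Sum>v\<in>R U. ?q * card U)"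
    by (rule sum.cong) (auto simp: kv')
  finally have e2: "?q * card Z' = (?V - card (R U)) * card U + card (R U) * (?q * card U)"
    by (simp add: card_Diff_subset)
  have RV: "card (R U) \<le> ?V" using card_mono[of UNIV "R U"] by simp
  have "U \<noteq> {}" using U0 by auto
  hence U1: "card U \<ge> 1" by (simp add: Suc_le_eq card_gt_0_iff)
  have "(card U - 1) * ?V + ?q * ?V = (?V - card (R U)) * card U + card (R U) * (?q * card U)"
    using e1 e2 ZZ by metis
  from arith_aux[OF this RV U1 q2] show ?thesis .
qed

end


lemma (in pairing) flip_pairing: "pairing F (\<lambda>x y. b y x)"
  by unfold_locales (use F addL addR smL smR inF ndL ndR swap in auto)

lemma (in pairing) L_card:
  "subspace_over F U \<Longrightarrow> card (Rp (\<lambda>x y. b y x) U) * card U = card (UNIV :: ('a^'n) set)"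
  using pairing.R_card[OF flip_pairing] by blast

lemma (in pairing) L_sub: "subspace_over F (Rp (\<lambda>x y. b y x) X)"
  using pairing.R_sub[OF flip_pairing] by blast

lemma (in pairing) L_subU: "subspace_over UNIV X \<Longrightarrow> subspace_over UNIV (Rp (\<lambda>x y. b y x) X)"
  using pairing.R_subU[OF flip_pairing] by blast

lemma (in pairing) RL:
  assumes X: "subspace_over F X"
  shows "Rp b (Rp (\<lambda>x y. b y x) X) = X"
proof -
  have sub: "X \<subseteq> Rp b (Rp (\<lambda>x y. b y x) X)" unfolding Rp_def by auto
  have c1: "card (Rp b (Rp (\<lambda>x y. b y x) X)) * card (Rp (\<lambda>x y. b y x) X) = card (UNIV :: ('a^'n) set)"
    by (rule R_card[OF L_sub])
  have c2: "card (Rp (\<lambda>x y. b y x) X) * card X = card (UNIV :: ('a^'n) set)"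
    by (rule L_card[OF X])
  have "Rp (\<lambda>x y. b y x) X \<noteq> {}" using subspace_0[OF L_sub] by blast
  hence pos: "card (Rp (\<lambda>x y. b y x) X) > 0" by (simp add: card_gt_0_iff)
  have "card (Rp b (Rp (\<lambda>x y. b y x) X)) = card X"
    using c1 c2 pos by (metis mult.commute nat_mult_eq_cancel1)
  thus ?thesis using sub by (metis card_subset_eq finite)
qed

lemma (in pairing) LR:
  assumes X: "subspace_over F X"
  shows "Rp (\<lambda>x y. b y x) (Rp b X) = X"
  using pairing.RL[OF flip_pairing X] by simp

definition sumset :: "('a::ab_group_add) set \<Rightarrow> 'a set \<Rightarrow> 'a set" where
  "sumset A B = {a + b | a b. a \<in> A \<and> b \<in> B}"

lemma sumset_sub:
  fixes A :: "('a::{field,finite}^'n) set"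
  assumes A: "subspace_over K A" and B: "subspace_over K B"
  shows "subspace_over K (sumset A B)"
  unfolding subspace_over_def
proof (intro conjI ballI)
  show "0 \<in> sumset A B" unfolding sumset_def using subspace_0[OF A] subspace_0[OF B] by force
next
  fix x y assume "x \<in> sumset A B" "y \<in> sumset A B"
  then obtain a1 b1 a2 b2 where "x = a1 + b1" "y = a2 + b2" "a1 \<in> A" "a2 \<in> A" "b1 \<in> B" "b2 \<in> B"
    unfolding sumset_def by blast
  moreover have "x + y = (a1 + a2) + (b1 + b2)" using calculation by (simp add: algebra_simps)
  ultimately show "x + y \<in> sumset A B" unfolding sumset_def
    using subspace_add[OF A] subspace_add[OF B] by blast
next
  fix c x assume c: "c \<in> K" and "x \<in> sumset A B"
  then obtain a1 b1 where "x = a1 + b1" "a1 \<in> A" "b1 \<in> B"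
    unfolding sumset_def by blast
  moreover have "c *s x = c *s a1 + c *s b1" using calculation by (simp add: vector_add_ldistrib)
  ultimately show "c *s x \<in> sumset A B" unfolding sumset_def
    using subspace_smult[OF A c] subspace_smult[OF B c] by blast
qed

lemma inter_sub: "subspace_over K A \<Longrightarrow> subspace_over K B \<Longrightarrow> subspace_over K (A \<inter> B)"
  unfolding subspace_over_def by blast

lemma sumset_super1: "0 \<in> B \<Longrightarrow> A \<subseteq> sumset A B"
  unfolding sumset_def by force

lemma sumset_super2: "0 \<in> A \<Longrightarrow> B \<subseteq> sumset A B"
  unfolding sumset_def by force

lemma card_sumset:
  fixes A :: "('a::{field,finite}^'n) set"
  assumes K: "is_subfield K" and A: "subspace_over K A" and B: "subspace_over K B"
  shows "card (sumset A B) * card (A \<inter> B) = card A * card B"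
proof -
  have "card (A \<times> B) = card (sumset A B) * card (A \<inter> B)"
  proof (rule fibre_count[where f = "\<lambda>(a, b). a + b"])
    show "(\<lambda>(a, b). a + b) ` (A \<times> B) \<subseteq> sumset A B" unfolding sumset_def by auto
    fix y assume "y \<in> sumset A B"
    then obtain a0 b0 where ab: "y = a0 + b0" "a0 \<in> A" "b0 \<in> B" unfolding sumset_def by blast
    have "{x \<in> A \<times> B. (\<lambda>(a, b). a + b) x = y} = (\<lambda>t. (a0 + t, b0 - t)) ` (A \<inter> B)"
    proof
      show "{x \<in> A \<times> B. (\<lambda>(a, b). a + b) x = y} \<subseteq> (\<lambda>t. (a0 + t, b0 - t)) ` (A \<inter> B)"
      proof
        fix x assume x: "x \<in> {x \<in> A \<times> B. (\<lambda>(a, b). a + b) x = y}"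
        obtain a b' where x': "x = (a, b')" by (cases x)
        have a: "a \<in> A" "b' \<in> B" "a + b' = a0 + b0" using x x' ab by auto
        have "a - a0 \<in> A" using subspace_diff[OF K A a(1) ab(2)] .
        moreover have "a - a0 = b0 - b'" using a(3) by (simp add: algebra_simps)
        moreover have "b0 - b' \<in> B" using subspace_diff[OF K B ab(3) a(2)] .
        ultimately have "a - a0 \<in> A \<inter> B" by simp
        moreover have "x = (a0 + (a - a0), b0 - (a - a0))" using x' a(3) by (simp add: algebra_simps)
        ultimately show "x \<in> (\<lambda>t. (a0 + t, b0 - t)) ` (A \<inter> B)" by (rule rev_image_eqI)
      qed
    next
      show "(\<lambda>t. (a0 + t, b0 - t)) ` (A \<inter> B) \<subseteq> {x \<in> A \<times> B. (\<lambda>(a, b). a + b) x = y}"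
      proof
        fix x assume "x \<in> (\<lambda>t. (a0 + t, b0 - t)) ` (A \<inter> B)"
        then obtain t where t: "t \<in> A" "t \<in> B" "x = (a0 + t, b0 - t)" by blast
        have "a0 + t \<in> A" using subspace_add[OF A ab(2) t(1)] .
        moreover have "b0 - t \<in> B" using subspace_diff[OF K B ab(3) t(2)] .
        ultimately show "x \<in> {x \<in> A \<times> B. (\<lambda>(a, b). a + b) x = y}" using t(3) ab(1) by simp
      qed
    qed
    moreover have "inj_on (\<lambda>t. (a0 + t, b0 - t)) (A \<inter> B)" by (rule inj_onI) simp
    ultimately show "card {x \<in> A \<times> B. (\<lambda>(a, b). a + b) x = y} = card (A \<inter> B)" by (simp add: card_image)
  qed simp_all
  thus ?thesis by (simp add: card_cartesian_product)
qed

lemma (in pairing) R_sumset: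
  assumes "0 \<in> A" "0 \<in> B"
  shows "Rp b (sumset A B) = Rp b A \<inter> Rp b B"
proof
  show "Rp b (sumset A B) \<subseteq> Rp b A \<inter> Rp b B"
    using R_anti sumset_super1[OF assms(2)] sumset_super2[OF assms(1)] by blast
  show "Rp b A \<inter> Rp b B \<subseteq> Rp b (sumset A B)"
    unfolding Rp_def sumset_def by (auto simp: addL)
qed


lemma arith2:
  fixes Q M d :: nat
  assumes Q: "Q \<ge> 2" and M: "M \<ge> 2" and e: "(Q ^ (2 * M) - 1) * (Q - 1) = (Q ^ d - 1) * (Q ^ M - 1)"
  shows False
proof -
  have qm: "Q ^ M > Q" using Q M by (metis Suc_1 Suc_le_lessD power_one_right power_strict_increasing_iff)
  have p1: "Q ^ (2 * M) \<ge> 1" "Q ^ d \<ge> 1" "Q ^ M \<ge> 1" using Q by simp_all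
  have "int ((Q ^ (2 * M) - 1) * (Q - 1)) = int ((Q ^ d - 1) * (Q ^ M - 1))" using e by simp
  hence "(int Q ^ M * int Q ^ M - 1) * (int Q - 1) = (int Q ^ d - 1) * (int Q ^ M - 1)"
    using p1 Q by (simp add: of_nat_diff power_mult mult_2 power_add)
  hence "(int Q ^ M - 1) * ((int Q ^ M + 1) * (int Q - 1)) = (int Q ^ M - 1) * (int Q ^ d - 1)"
    by (simp add: algebra_simps)
  moreover have "int Q ^ M - 1 \<noteq> 0"
  proof -
    have "Q ^ M > 1" using qm Q by simp
    hence "int (Q ^ M) > 1" by linarith
    thus ?thesis by simp
  qed
  ultimately have X: "(int Q ^ M + 1) * (int Q - 1) = int Q ^ d - 1" by simp
  have "int Q ^ d > int Q ^ M"
  proof -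
    have "(int Q ^ M + 1) * (int Q - 1) \<ge> (int Q ^ M + 1) * 1" using Q by (intro mult_left_mono) auto
    thus ?thesis using X by simp
  qed
  hence "Q ^ d > Q ^ M" by (metis of_nat_less_iff of_nat_power)
  hence "d > M" using Q by simp
  hence "M + 1 \<le> d" by simp
  hence "Q ^ (M + 1) \<le> Q ^ d" using Q by (intro power_increasing) auto
  hence "int Q ^ d \<ge> int Q ^ M * int Q" by (metis of_nat_le_iff of_nat_mult of_nat_power power_add power_one_right)
  moreover have "int Q ^ d = int Q ^ M * int Q - int Q ^ M + int Q" using X by (simp add: algebra_simps)
  moreover have "int Q ^ M > int Q" using qm by (metis of_nat_less_iff of_nat_power)
  ultimately show False by linarith
qed


context
  fixes F :: "'a::{field,finite} set" and m :: nat and \<sigma> :: "'a^'n \<Rightarrow> 'a^'n \<Rightarrow> 'a" and U :: "('a^'n) set"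
    and k N :: nat
  assumes kdef: "k = CARD('n)" and Ndef: "N = (k * m) div 2"
    and A1: "is_subfield F" and A2: "card (UNIV :: 'a set) = card F ^ m" and A3: "m > 0"
    and A4: "even (k * m)" and A5: "bilinear_form \<sigma>" and A6: "nondegenerate_form \<sigma>"
    and A7: "is_system F N U" and A8: "scattered F U"
begin

interpretation fs: fsetting F m using A1 A2 A3 by unfold_locales

definition "bb u v = trace_over F m (\<sigma> u v)"

lemma bb_pairing: "pairing F bb"
proof unfold_locales
  show "is_subfield F" by (rule A1)
  fix x y z :: "'a^'n" and c :: 'a
  show "bb (x + y) z = bb x z + bb y z" using A5 by (simp add: bb_def bilinear_form_def fs.tr_add)
  show "bb z (x + y) = bb z x + bb z y" using A5 by (simp add: bb_def bilinear_form_def fs.tr_add)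
  show "bb (c *s x) y = bb x (c *s y)" using A5 by (simp add: bb_def bilinear_form_def)
  show "bb x y \<in> F" by (simp add: bb_def fs.tr_in_F)
  show "c \<in> F \<Longrightarrow> bb (c *s x) y = c * bb x y" using A5 by (simp add: bb_def bilinear_form_def fs.tr_smult)
  show "c \<in> F \<Longrightarrow> bb x (c *s y) = c * bb x y" using A5 by (simp add: bb_def bilinear_form_def fs.tr_smult)
next
  obtain t where t: "trace_over F m t \<noteq> 0" using fs.tr_nonzero by blast
  fix x y :: "'a^'n"
  show "x \<noteq> 0 \<Longrightarrow> \<exists>y. bb x y \<noteq> 0"
  proof -
    assume "x \<noteq> 0"
    then obtain y where y: "\<sigma> x y \<noteq> 0" using A6 unfolding nondegenerate_form_def by blast
    have "\<sigma> x ((t / \<sigma> x y) *s y) = t" using A5 y by (simp add: bilinear_form_def)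
    thus ?thesis using t by (intro exI[of _ "(t / \<sigma> x y) *s y"]) (simp add: bb_def)
  qed
  show "y \<noteq> 0 \<Longrightarrow> \<exists>x. bb x y \<noteq> 0"
  proof -
    assume "y \<noteq> 0"
    then obtain x where x: "\<sigma> x y \<noteq> 0" using A6 unfolding nondegenerate_form_def by blast
    have "\<sigma> ((t / \<sigma> x y) *s x) y = t" using A5 x by (simp add: bilinear_form_def)
    thus ?thesis using t by (intro exI[of _ "(t / \<sigma> x y) *s x"]) (simp add: bb_def)
  qed
qed

interpretation pr: pairing F bb by (rule bb_pairing)

abbreviation "q \<equiv> card F"
abbreviation "U' \<equiv> Rp bb U"

lemma dual_eq: "dual_system F m \<sigma> U = U'"
  by (simp add: dual_system_def Rp_def bb_def)

lemma q2: "q \<ge> 2" by (rule fs.q_ge2)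

lemma twoN: "k * m = 2 * N" using A4 Ndef by simp

lemma cardV: "card (UNIV :: ('a^'n) set) = q ^ (2 * N)"
  using A2 twoN kdef by (simp add: power_mult mult.commute flip: power_mult)

lemma cardF: "subspace_over F (X::('a^'n) set) \<Longrightarrow> card X = q ^ dim_over F X"
  by (rule card_subspace[OF A1])

lemma subU_F: "subspace_over UNIV (X::('a^'n) set) \<Longrightarrow> subspace_over F X"
  by (simp add: subspace_over_def)

lemma cardU: "subspace_over UNIV (X::('a^'n) set) \<Longrightarrow> card X = q ^ (m * dim_over UNIV X)"
  using card_subspace[OF sfUNIV, of X] A2 by (simp add: power_mult)

lemma powq_inj: "q ^ a = q ^ b \<longleftrightarrow> a = b" using q2 by simp
lemma powq_le: "q ^ a \<le> q ^ b \<longleftrightarrow> a \<le> b" using q2 by simp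
lemma powq_less: "q ^ a < q ^ b \<longleftrightarrow> a < b" using q2 by simp

lemma U_sub: "subspace_over F U" using A7 by (simp add: is_system_def)

lemma card_U: "card U = q ^ N"
  using cardF[OF U_sub] A7 by (simp add: is_system_def)

lemma U'_sub: "subspace_over F U'" by (rule pr.R_sub)

lemma card_U': "card U' = q ^ N"
proof -
  have "card U' * q ^ N = q ^ N * q ^ N" using pr.R_card[OF U_sub] card_U cardV
    by (simp add: mult_2 power_add)
  moreover have "F \<noteq> {}" using sf0[OF A1] by auto
  ultimately show ?thesis by simp
qed

lemma dim_U': "dim_over F U' = N"
  using cardF[OF U'_sub] card_U' powq_inj by simp

lemma m2: "m \<ge> 2"
proof (rule ccontr)
  assume "\<not> m \<ge> 2"
  hence m1: "m = 1" using A3 by simp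
  have "F = UNIV" using A2 m1 by (metis card_subset_eq finite power_one_right subset_UNIV)
  hence "subspace_over UNIV U" using U_sub by simp
  hence "span_over UNIV U = U" by (rule span_self[OF sfUNIV])
  hence "U = UNIV" using A7 by (simp add: is_system_def)
  hence "q ^ N = q ^ (2 * N)" using card_U cardV by simp
  hence "N = 0" using powq_inj by simp
  moreover have "k > 0" using kdef by simp
  ultimately show False using twoN m1 by simp
qed

lemma KF:
  assumes W: "subspace_over UNIV W"
  shows "card (U' \<inter> Rp bb W) * card U * card W = card (UNIV::('a^'n) set) * card (U \<inter> W)"
proof -
  have WF: "subspace_over F W" by (rule subU_F[OF W])
  have S: "subspace_over F (sumset U W)" by (rule sumset_sub[OF U_sub WF])
  have e: "U' \<inter> Rp bb W = Rp bb (sumset U W)"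
    by (rule pr.R_sumset[symmetric]) (use subspace_0[OF U_sub] subspace_0[OF WF] in auto)
  have c1: "card (Rp bb (sumset U W)) * card (sumset U W) = card (UNIV::('a^'n) set)"
    by (rule pr.R_card[OF S])
  have c2: "card (sumset U W) * card (U \<inter> W) = card U * card W"
    by (rule card_sumset[OF A1 U_sub WF])
  have "card (U' \<inter> Rp bb W) * card U * card W = card (Rp bb (sumset U W)) * (card U * card W)"
    using e by simp
  also have "\<dots> = card (Rp bb (sumset U W)) * card (sumset U W) * card (U \<inter> W)"
    using c2 by simp
  also have "\<dots> = card (UNIV::('a^'n) set) * card (U \<inter> W)" using c1 by simp
  finally show ?thesis .
qed

lemma RW_subU: "subspace_over UNIV W \<Longrightarrow> subspace_over UNIV (Rp bb W)"
  by (rule pr.R_subU)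

lemma KFd:
  assumes W: "subspace_over UNIV W"
  shows "dim_over F (U' \<inter> Rp bb W) + m * dim_over UNIV W = N + dim_over F (U \<inter> W)"
proof -
  have s1: "subspace_over F (U' \<inter> Rp bb W)"
    by (rule inter_sub[OF U'_sub subU_F[OF RW_subU[OF W]]])
  have s2: "subspace_over F (U \<inter> W)" by (rule inter_sub[OF U_sub subU_F[OF W]])
  have "q ^ dim_over F (U' \<inter> Rp bb W) * q ^ N * q ^ (m * dim_over UNIV W) = q ^ (2 * N) * q ^ dim_over F (U \<inter> W)"
    using KF[OF W] cardF[OF s1] cardF[OF s2] cardU[OF W] card_U cardV by simp
  hence "q ^ (dim_over F (U' \<inter> Rp bb W) + N + m * dim_over UNIV W) = q ^ (2 * N + dim_over F (U \<inter> W))"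
    by (simp add: power_add)
  hence "dim_over F (U' \<inter> Rp bb W) + N + m * dim_over UNIV W = 2 * N + dim_over F (U \<inter> W)"
    using powq_inj by blast
  thus ?thesis by simp
qed

lemma line:
  fixes w :: "'a^'n"
  assumes w: "w \<noteq> 0"
  shows "subspace_over UNIV (range (\<lambda>c. c *s w))" "card (range (\<lambda>c. c *s w)) = q ^ m"
    "dim_over UNIV (range (\<lambda>c. c *s w)) = 1"
proof -
  show sub: "subspace_over UNIV (range (\<lambda>c. c *s w))"
    unfolding subspace_over_def
  proof (intro conjI ballI)
    show "0 \<in> range (\<lambda>c. c *s w)" by (rule range_eqI[of _ _ 0]) simp
    fix x y assume "x \<in> range (\<lambda>c. c *s w)" "y \<in> range (\<lambda>c. c *s w)"
    then obtain a b where "x = a *s w" "y = b *s w" by blast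
    hence "x + y = (a + b) *s w" by (simp add: vector_sadd_rdistrib)
    thus "x + y \<in> range (\<lambda>c. c *s w)" by blast
  next
    fix c x assume "x \<in> range (\<lambda>c. c *s w)"
    then obtain a where "x = a *s w" by blast
    hence "c *s x = (c * a) *s w" by (simp add: vector_smult_assoc)
    thus "c *s x \<in> range (\<lambda>c. c *s w)" by blast
  qed
  obtain i where i: "w $ i \<noteq> 0" using w by (metis vec_eq_iff zero_index)
  have "inj (\<lambda>c. c *s w)"
  proof (rule injI)
    fix a b assume "a *s w = b *s w"
    hence "a = b \<or> w = 0" by simp
    thus "a = b" using w by simp
  qed
  hence c: "card (range (\<lambda>c. c *s w)) = q ^ m" using A2 by (simp add: card_image)
  thus "card (range (\<lambda>c. c *s w)) = q ^ m" .
  have "q ^ m = q ^ (m * dim_over UNIV (range (\<lambda>c. c *s w)))" using cardU[OF sub] c by simp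
  hence "m = m * dim_over UNIV (range (\<lambda>c. c *s w))" using powq_inj by blast
  thus "dim_over UNIV (range (\<lambda>c. c *s w)) = 1" using A3 by simp
qed

lemma scat:
  assumes W: "subspace_over UNIV W" "dim_over UNIV W = 1"
  shows "card (U \<inter> W) \<le> q"
proof -
  have "int (dim_over F (U \<inter> W)) \<le> 1"
    using A8 W unfolding scattered_def evasive_def by auto
  hence "dim_over F (U \<inter> W) \<le> 1" by simp
  hence "q ^ dim_over F (U \<inter> W) \<le> q ^ 1" using powq_le by blast
  thus ?thesis using cardF[OF inter_sub[OF U_sub subU_F[OF W(1)]]] by simp
qed

lemma U'_span: "span_over UNIV U' = UNIV"
proof (rule ccontr)
  let ?S = "span_over UNIV U'"
  let ?L = "Rp (\<lambda>x y. bb y x) ?S"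
  assume ne: "?S \<noteq> UNIV"
  have Ssub: "subspace_over UNIV ?S" by (rule span_subspace[OF sfUNIV])
  have U'S: "U' \<subseteq> ?S" by (rule span_sup[OF sfUNIV])
  have lt: "card ?S < card (UNIV :: ('a^'n) set)" using ne by (intro psubset_card_mono) auto
  have cL: "card ?L * card ?S = card (UNIV :: ('a^'n) set)" by (rule pr.L_card[OF subU_F[OF Ssub]])
  have "card ?L > 1"
  proof (rule ccontr)
    assume "\<not> card ?L > 1"
    hence "card ?L * card ?S \<le> 1 * card ?S" by (intro mult_le_mono1) simp
    thus False using cL lt by simp
  qed
  hence "\<not> ?L \<subseteq> {0}" using card_mono[of "{0}" ?L] by auto
  then obtain w where w: "w \<in> ?L" "w \<noteq> 0" by blast
  let ?W = "range (\<lambda>c. c *s w)"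
  have LU: "subspace_over UNIV ?L" by (rule pr.L_subU[OF Ssub])
  have WL: "?W \<subseteq> ?L" using subspace_smult[OF LU _ w(1)] by auto
  have "?S = Rp bb ?L" by (rule pr.RL[OF subU_F[OF Ssub], symmetric])
  also have "\<dots> \<subseteq> Rp bb ?W" by (rule pr.R_anti[OF WL])
  finally have "U' \<subseteq> Rp bb ?W" using U'S by blast
  hence "U' \<inter> Rp bb ?W = U'" by blast
  hence e: "card U' * card U * card ?W = card (UNIV::('a^'n) set) * card (U \<inter> ?W)"
    using KF[OF line(1)[OF w(2)]] by simp
  have "card (U \<inter> ?W) \<le> q" by (rule scat[OF line(1,3)[OF w(2)]])
  hence "card (UNIV::('a^'n) set) * card (U \<inter> ?W) \<le> card (UNIV::('a^'n) set) * q" by (rule mult_le_mono2)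
  hence "q ^ N * q ^ N * q ^ m \<le> q ^ (2 * N) * q"
    using e card_U card_U' line(2)[OF w(2)] cardV by simp
  hence "q ^ (2 * N + m) \<le> q ^ (2 * N + 1)" by (simp add: power_add mult_2)
  hence "2 * N + m \<le> 2 * N + 1" by (simp only: powq_le)
  thus False using m2 by simp
qed

lemma U'_system: "is_system F N U'"
  unfolding is_system_def using U'_sub dim_U' U'_span by simp


lemma Rp_anti: "X \<subseteq> Y \<Longrightarrow> Rp f Y \<subseteq> Rp f X"
  unfolding Rp_def by auto

lemma dimR:
  assumes W: "subspace_over UNIV W"
  shows "dim_over UNIV (Rp bb W) + dim_over UNIV W = k"
proof -
  have "card (Rp bb W) * card W = card (UNIV :: ('a^'n) set)" by (rule pr.R_card[OF subU_F[OF W]])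
  hence "q ^ (m * dim_over UNIV (Rp bb W)) * q ^ (m * dim_over UNIV W) = q ^ (k * m)"
    using cardU[OF W] cardU[OF RW_subU[OF W]] cardV twoN by simp
  hence "q ^ (m * dim_over UNIV (Rp bb W) + m * dim_over UNIV W) = q ^ (k * m)" by (simp add: power_add)
  hence "m * dim_over UNIV (Rp bb W) + m * dim_over UNIV W = k * m" using powq_inj by blast
  hence "m * (dim_over UNIV (Rp bb W) + dim_over UNIV W) = m * k" by (simp add: algebra_simps)
  thus ?thesis using A3 by simp
qed

lemma dimL:
  assumes W: "subspace_over UNIV W"
  shows "dim_over UNIV (Rp (\<lambda>x y. bb y x) W) + dim_over UNIV W = k"
proof -
  have "card (Rp (\<lambda>x y. bb y x) W) * card W = card (UNIV :: ('a^'n) set)" by (rule pr.L_card[OF subU_F[OF W]])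
  hence "q ^ (m * dim_over UNIV (Rp (\<lambda>x y. bb y x) W)) * q ^ (m * dim_over UNIV W) = q ^ (k * m)"
    using cardU[OF W] cardU[OF pr.L_subU[OF W]] cardV twoN by simp
  hence "q ^ (m * dim_over UNIV (Rp (\<lambda>x y. bb y x) W) + m * dim_over UNIV W) = q ^ (k * m)" by (simp add: power_add)
  hence "m * dim_over UNIV (Rp (\<lambda>x y. bb y x) W) + m * dim_over UNIV W = k * m" using powq_inj by blast
  hence "m * (dim_over UNIV (Rp (\<lambda>x y. bb y x) W) + dim_over UNIV W) = m * k" by (simp add: algebra_simps)
  thus ?thesis using A3 by simp
qed

lemma E12:
  assumes E1: "evasive F 2 (int m - 1) U"
  shows "evasive F (int k - 2) (int N - int m - 1) U'"
  unfolding evasive_def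
proof (intro allI impI, elim conjE)
  fix H :: "('a^'n) set" assume H: "subspace_over UNIV H" and dH: "int (dim_over UNIV H) = int k - 2"
  let ?W = "Rp (\<lambda>x y. bb y x) H"
  have Wsub: "subspace_over UNIV ?W" by (rule pr.L_subU[OF H])
  have "dim_over UNIV ?W + dim_over UNIV H = k" by (rule dimL[OF H])
  hence dW: "dim_over UNIV ?W = 2" using dH by simp
  have RW: "Rp bb ?W = H" by (rule pr.RL[OF subU_F[OF H]])
  have "dim_over F (U' \<inter> H) + m * 2 = N + dim_over F (U \<inter> ?W)" using KFd[OF Wsub] RW dW by simp
  moreover have "int (dim_over F (U \<inter> ?W)) \<le> int m - 1" using E1 Wsub dW unfolding evasive_def by auto
  ultimately show "int (dim_over F (U' \<inter> H)) \<le> int N - int m - 1" by linarith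
qed

lemma E21:
  assumes E2: "evasive F (int k - 2) (int N - int m - 1) U'"
  shows "evasive F 2 (int m - 1) U"
  unfolding evasive_def
proof (intro allI impI, elim conjE)
  fix W :: "('a^'n) set" assume W: "subspace_over UNIV W" and dW: "int (dim_over UNIV W) = 2"
  let ?H = "Rp bb W"
  have Hsub: "subspace_over UNIV ?H" by (rule RW_subU[OF W])
  have "dim_over UNIV ?H + dim_over UNIV W = k" by (rule dimR[OF W])
  hence dH: "int (dim_over UNIV ?H) = int k - 2" using dW by simp
  have "dim_over F (U' \<inter> ?H) + m * 2 = N + dim_over F (U \<inter> W)" using KFd[OF W] dW by simp
  moreover have "int (dim_over F (U' \<inter> ?H)) \<le> int N - int m - 1" using E2 Hsub dH unfolding evasive_def by auto
  ultimately show "int (dim_over F (U \<inter> W)) \<le> int m - 1" by linarith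
qed


lemma LINE:
  assumes W2: "subspace_over UNIV W2" "dim_over UNIV W2 = 2"
  shows "\<exists>w\<in>W2. w \<noteq> 0 \<and> U \<inter> range (\<lambda>c. c *s w) = {0}"
proof (rule ccontr)
  assume neg: "\<not> ?thesis"
  have nz: "\<exists>x\<in>U \<inter> range (\<lambda>c. c *s w). x \<noteq> 0" if "w \<in> W2" "w \<noteq> 0" for w
  proof -
    have "0 \<in> U \<inter> range (\<lambda>c. c *s w)" using subspace_0[OF U_sub] by (auto intro: range_eqI[of _ _ 0])
    hence "U \<inter> range (\<lambda>c. c *s w) \<noteq> {0}" using neg that by auto
    thus ?thesis using \<open>0 \<in> U \<inter> range (\<lambda>c. c *s w)\<close> by blast
  qed
  let ?A = "U \<inter> W2"
  have Asub: "subspace_over F ?A" by (rule inter_sub[OF U_sub subU_F[OF W2(1)]])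
  have cW2: "card W2 = q ^ (2 * m)" using cardU[OF W2(1)] W2(2) by (simp add: mult.commute)
  have cl: "card (U \<inter> range (\<lambda>c. c *s w)) = q" if w: "w \<in> W2" "w \<noteq> 0" for w
  proof (rule antisym)
    show "card (U \<inter> range (\<lambda>c. c *s w)) \<le> q" by (rule scat[OF line(1,3)[OF w(2)]])
    obtain x where x: "x \<in> U" "x \<in> range (\<lambda>c. c *s w)" "x \<noteq> 0" using nz[OF w] by blast
    have "(\<lambda>c. c *s x) ` F \<subseteq> U \<inter> range (\<lambda>c. c *s w)"
      using subspace_smult[OF U_sub _ x(1)] subspace_smult[OF line(1)[OF w(2)] _ x(2)] by auto
    moreover have "inj_on (\<lambda>c. c *s x) F"
    proof (rule inj_onI)
      fix a b assume "a *s x = b *s x"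
      hence "a = b \<or> x = 0" by simp
      thus "a = b" using x(3) by simp
    qed
    ultimately show "q \<le> card (U \<inter> range (\<lambda>c. c *s w))"
      by (metis card_image card_mono finite)
  qed
  define Z where "Z = Sigma (W2 - {0}) (\<lambda>w. (U \<inter> range (\<lambda>c. c *s w)) - {0})"
  define Z' where "Z' = Sigma (?A - {0}) (\<lambda>a. range (\<lambda>c. c *s a) - {0})"
  have "card Z = (\<Sum>w\<in>W2 - {0}. card ((U \<inter> range (\<lambda>c. c *s w)) - {0}))" unfolding Z_def by simp
  also have "\<dots> = (\<Sum>w\<in>W2 - {0}. q - 1)"
  proof (rule sum.cong)
    fix w assume "w \<in> W2 - {0}"
    moreover have "0 \<in> U \<inter> range (\<lambda>c. c *s w)" using subspace_0[OF U_sub] by (auto intro: range_eqI[of _ _ 0])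
    ultimately show "card ((U \<inter> range (\<lambda>c. c *s w)) - {0}) = q - 1" using cl by (simp add: card_Diff_singleton)
  qed simp
  also have "\<dots> = (q ^ (2 * m) - 1) * (q - 1)" using cW2 subspace_0[OF W2(1)] by (simp add: card_Diff_singleton)
  finally have cZ: "card Z = (q ^ (2 * m) - 1) * (q - 1)" .
  have "card Z' = (\<Sum>a\<in>?A - {0}. card (range (\<lambda>c. c *s a) - {0}))" unfolding Z'_def by simp
  also have "\<dots> = (\<Sum>a\<in>?A - {0}. q ^ m - 1)"
  proof (rule sum.cong)
    fix a assume a: "a \<in> ?A - {0}"
    have "0 \<in> range (\<lambda>c. c *s a)" by (rule range_eqI[of _ _ 0]) simp
    thus "card (range (\<lambda>c. c *s a) - {0}) = q ^ m - 1" using line(2)[of a] a by (simp add: card_Diff_singleton)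
  qed simp
  also have "\<dots> = (q ^ dim_over F ?A - 1) * (q ^ m - 1)"
    using cardF[OF Asub] subspace_0[OF Asub] by (simp add: card_Diff_singleton)
  finally have cZ': "card Z' = (q ^ dim_over F ?A - 1) * (q ^ m - 1)" .
  have "Z' = (\<lambda>(w, a). (a, w)) ` Z"
  proof
    show "(\<lambda>(w, a). (a, w)) ` Z \<subseteq> Z'"
    proof
      fix p assume "p \<in> (\<lambda>(w, a). (a, w)) ` Z"
      then obtain w a where p: "p = (a, w)" and w: "w \<in> W2" "w \<noteq> 0" and a: "a \<in> U" "a \<in> range (\<lambda>c. c *s w)" "a \<noteq> 0"
        unfolding Z_def by auto
      obtain c where c: "a = c *s w" using a(2) by blast
      have c0: "c \<noteq> 0" using c a(3) by auto
      have "a \<in> W2" using subspace_smult[OF W2(1) _ w(1)] c by simp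
      moreover have "w = inverse c *s a" using c c0 by (simp add: vector_smult_assoc)
      ultimately show "p \<in> Z'" unfolding Z'_def using p w a by auto
    qed
  next
    show "Z' \<subseteq> (\<lambda>(w, a). (a, w)) ` Z"
    proof
      fix p assume "p \<in> Z'"
      then obtain w a where p: "p = (a, w)" and a: "a \<in> U" "a \<in> W2" "a \<noteq> 0" and w: "w \<in> range (\<lambda>c. c *s a)" "w \<noteq> 0"
        unfolding Z'_def by auto
      obtain c where c: "w = c *s a" using w(1) by blast
      have c0: "c \<noteq> 0" using c w(2) by auto
      have "w \<in> W2" using subspace_smult[OF W2(1) _ a(2)] c by simp
      moreover have "a = inverse c *s w" using c c0 by (simp add: vector_smult_assoc)
      ultimately have "(w, a) \<in> Z" unfolding Z_def using a w by auto
      thus "p \<in> (\<lambda>(w, a). (a, w)) ` Z" using p by force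
    qed
  qed
  moreover have "inj_on (\<lambda>(w, a). (a, w)) Z" by (rule inj_onI) auto
  ultimately have "card Z' = card Z" by (simp add: card_image)
  hence "(q ^ (2 * m) - 1) * (q - 1) = (q ^ dim_over F ?A - 1) * (q ^ m - 1)" using cZ cZ' by simp
  thus False by (rule arith2[OF q2 m2])
qed


lemma E1C:
  assumes E1: "evasive F 2 (int m - 1) U"
  shows "cutting F U'"
  unfolding cutting_def
proof (intro allI impI, elim conjE)
  fix H :: "('a^'n) set" assume H: "subspace_over UNIV H" and dH: "dim_over UNIV H = CARD('n) - 1"
  let ?S = "span_over UNIV (H \<inter> U')"
  have Ssub: "subspace_over UNIV ?S" by (rule span_subspace[OF sfUNIV])
  have SH: "?S \<subseteq> H" by (rule span_least[OF sfUNIV H]) auto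
  show "?S = H"
  proof (rule ccontr)
    assume ne: "?S \<noteq> H"
    have lt: "card ?S < card H" using ne SH by (intro psubset_card_mono) auto
    let ?W1 = "Rp (\<lambda>x y. bb y x) H"
    let ?LS = "Rp (\<lambda>x y. bb y x) ?S"
    have W1sub: "subspace_over UNIV ?W1" by (rule pr.L_subU[OF H])
    have LSsub: "subspace_over UNIV ?LS" by (rule pr.L_subU[OF Ssub])
    have k1: "k \<ge> 1" using kdef by simp
    have "dim_over UNIV ?W1 + dim_over UNIV H = k" by (rule dimL[OF H])
    hence "dim_over UNIV ?W1 + (CARD('n) - 1) = CARD('n)" using dH kdef by simp
    moreover have "CARD('n) \<ge> 1" by (simp add: Suc_leI)
    ultimately have dW1: "dim_over UNIV ?W1 = 1" by linarith
    have W1LS: "?W1 \<subseteq> ?LS" by (rule Rp_anti[OF SH])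
    have ca: "card ?W1 * card H = card (UNIV :: ('a^'n) set)" by (rule pr.L_card[OF subU_F[OF H]])
    have cb: "card ?LS * card ?S = card (UNIV :: ('a^'n) set)" by (rule pr.L_card[OF subU_F[OF Ssub]])
    have c1: "card ?W1 * card H = card ?LS * card ?S" by (rule trans[OF ca cb[symmetric]])
    have "?W1 \<noteq> {}" using subspace_0[OF W1sub] by blast
    hence W1pos: "card ?W1 > 0" by (simp add: card_gt_0_iff)
    have "card ?W1 < card ?LS"
    proof (rule ccontr)
      assume "\<not> card ?W1 < card ?LS"
      hence "card ?LS * card ?S \<le> card ?W1 * card ?S" by (intro mult_le_mono1) simp
      also have "\<dots> < card ?W1 * card H" using lt W1pos by simp
      finally show False using c1 by simp
    qed
    have "\<not> ?LS \<subseteq> ?W1"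
    proof
      assume "?LS \<subseteq> ?W1"
      hence "card ?LS \<le> card ?W1" by (intro card_mono) auto
      thus False using \<open>card ?W1 < card ?LS\<close> by simp
    qed
    then obtain w2 where w2: "w2 \<in> ?LS" "w2 \<notin> ?W1" by blast
    have w20: "w2 \<noteq> 0"
    proof
      assume "w2 = 0"
      thus False using w2(2) subspace_0[OF W1sub] by simp
    qed
    let ?l = "range (\<lambda>c. c *s w2)"
    let ?W2 = "sumset ?W1 ?l"
    have W2sub: "subspace_over UNIV ?W2" by (rule sumset_sub[OF W1sub line(1)[OF w20]])
    have int0: "?W1 \<inter> ?l = {0}"
    proof
      show "?W1 \<inter> ?l \<subseteq> {0}"
      proof
        fix x assume x: "x \<in> ?W1 \<inter> ?l"
        then obtain c where c: "x = c *s w2" by blast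
        show "x \<in> {0}"
        proof (cases "c = 0")
          case True thus ?thesis using c by simp
        next
          case False
          have "x \<in> ?W1" using x by blast
          hence "inverse c *s x \<in> ?W1" by (rule subspace_smult[OF W1sub UNIV_I])
          moreover have "inverse c *s x = w2" using c False by (simp add: vector_smult_assoc)
          ultimately show ?thesis using w2(2) by simp
        qed
      qed
    next
      show "{0} \<subseteq> ?W1 \<inter> ?l" using subspace_0[OF W1sub] subspace_0[OF line(1)[OF w20]] by auto
    qed
    have "card ?W2 * card (?W1 \<inter> ?l) = card ?W1 * card ?l" by (rule card_sumset[OF sfUNIV W1sub line(1)[OF w20]])
    hence "card ?W2 = q ^ m * q ^ m" using int0 cardU[OF W1sub] dW1 line(2)[OF w20] by simp
    moreover have "card ?W2 = q ^ (m * dim_over UNIV ?W2)" by (rule cardU[OF W2sub])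
    moreover have "q ^ m * q ^ m = q ^ (m * 2)" by (metis mult_2_right power_add)
    ultimately have "q ^ (m * dim_over UNIV ?W2) = q ^ (m * 2)" by simp
    hence "m * dim_over UNIV ?W2 = m * 2" using powq_inj by blast
    hence dW2: "dim_over UNIV ?W2 = 2" using A3 by simp
    have W2LS: "?W2 \<subseteq> ?LS"
    proof
      fix x assume "x \<in> ?W2"
      then obtain a b where ab: "x = a + b" "a \<in> ?W1" "b \<in> ?l" unfolding sumset_def by blast
      then obtain c where bc: "b = c *s w2" by blast
      have bL: "b \<in> ?LS" using subspace_smult[OF LSsub UNIV_I w2(1)] bc by simp
      have aL: "a \<in> ?LS" using W1LS ab(2) by blast
      show "x \<in> ?LS" using subspace_add[OF LSsub aL bL] ab(1) by simp
    qed
    have RW1: "Rp bb ?W1 = H" by (rule pr.RL[OF subU_F[OF H]])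
    have RLS: "Rp bb ?LS = ?S" by (rule pr.RL[OF subU_F[OF Ssub]])
    have R2H: "Rp bb ?W2 \<subseteq> H"
      using Rp_anti[OF sumset_super1[OF subspace_0[OF line(1)[OF w20]], of ?W1], of bb] RW1 by simp
    have SR2: "?S \<subseteq> Rp bb ?W2" using Rp_anti[OF W2LS, of bb] RLS by simp
    have "H \<inter> U' \<subseteq> ?S" by (rule span_sup[OF sfUNIV])
    hence eqs: "U' \<inter> Rp bb ?W2 = U' \<inter> H" using SR2 R2H by blast
    have k1': "dim_over F (U' \<inter> H) + m * 1 = N + dim_over F (U \<inter> ?W1)"
      using KFd[OF W1sub] RW1 dW1 by simp
    have k2': "dim_over F (U' \<inter> H) + m * 2 = N + dim_over F (U \<inter> ?W2)"
      using KFd[OF W2sub] eqs dW2 by simp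
    have "int (dim_over F (U \<inter> ?W2)) \<le> int m - 1" using E1 W2sub dW2 unfolding evasive_def by auto
    thus False using k1' k2' by linarith
  qed
qed

lemma CE1:
  assumes C: "cutting F U'"
  shows "evasive F 2 (int m - 1) U"
  unfolding evasive_def
proof (intro allI impI, elim conjE, rule ccontr)
  fix W2 :: "('a^'n) set" assume W2: "subspace_over UNIV W2" and dW2: "int (dim_over UNIV W2) = 2"
    and bad: "\<not> int (dim_over F (U \<inter> W2)) \<le> int m - 1"
  have dW2': "dim_over UNIV W2 = 2" using dW2 by simp
  obtain w where w: "w \<in> W2" "w \<noteq> 0" "U \<inter> range (\<lambda>c. c *s w) = {0}" using LINE[OF W2 dW2'] by blast
  let ?W1 = "range (\<lambda>c. c *s w)"
  have W1sub: "subspace_over UNIV ?W1" by (rule line(1)[OF w(2)])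
  have dW1: "dim_over UNIV ?W1 = 1" by (rule line(3)[OF w(2)])
  have W12: "?W1 \<subseteq> W2" using subspace_smult[OF W2(1) _ w(1)] by auto
  let ?H = "Rp bb ?W1"
  let ?H2 = "Rp bb W2"
  have Hsub: "subspace_over UNIV ?H" by (rule RW_subU[OF W1sub])
  have H2sub: "subspace_over UNIV ?H2" by (rule RW_subU[OF W2])
  have "dim_over UNIV ?H + dim_over UNIV ?W1 = k" by (rule dimR[OF W1sub])
  hence dH: "dim_over UNIV ?H = CARD('n) - 1" using dW1 kdef by simp
  have "dim_over UNIV ?H2 + dim_over UNIV W2 = k" by (rule dimR[OF W2])
  hence dH2: "dim_over UNIV ?H2 + 1 = dim_over UNIV ?H" using dH dW2' kdef by simp
  have H2H: "?H2 \<subseteq> ?H" by (rule Rp_anti[OF W12])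
  have d0: "dim_over F (U \<inter> ?W1) = 0"
  proof -
    have "card (U \<inter> ?W1) = 1" using w(3) by simp
    hence "q ^ dim_over F (U \<inter> ?W1) = q ^ 0" using cardF[OF inter_sub[OF U_sub subU_F[OF W1sub]]] by simp
    thus ?thesis using powq_inj by blast
  qed
  have k1: "dim_over F (U' \<inter> ?H) + m * 1 = N" using KFd[OF W1sub] dW1 d0 by simp
  have k2: "dim_over F (U' \<inter> ?H2) + m * 2 = N + dim_over F (U \<inter> W2)" using KFd[OF W2] dW2' by simp
  have "dim_over F (U' \<inter> ?H) \<le> dim_over F (U' \<inter> ?H2)" using k1 k2 bad by linarith
  hence "card (U' \<inter> ?H) \<le> card (U' \<inter> ?H2)"
    using cardF[OF inter_sub[OF U'_sub subU_F[OF Hsub]]] cardF[OF inter_sub[OF U'_sub subU_F[OF H2sub]]] powq_le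
    by simp
  moreover have "U' \<inter> ?H2 \<subseteq> U' \<inter> ?H" using H2H by blast
  ultimately have eq: "U' \<inter> ?H2 = U' \<inter> ?H" by (metis card_seteq finite)
  have "span_over UNIV (?H \<inter> U') = ?H" using C Hsub dH unfolding cutting_def by blast
  moreover have "span_over UNIV (?H \<inter> U') \<subseteq> ?H2"
    by (rule span_least[OF sfUNIV H2sub]) (use eq in blast)
  ultimately have "?H \<subseteq> ?H2" by simp
  hence "card ?H \<le> card ?H2" by (intro card_mono) auto
  hence "q ^ (m * dim_over UNIV ?H) \<le> q ^ (m * dim_over UNIV ?H2)" using cardU[OF Hsub] cardU[OF H2sub] by simp
  hence "m * dim_over UNIV ?H \<le> m * dim_over UNIV ?H2" using powq_le by blast
  thus False using dH2 A3 by simp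
qed

end

theorem proposition3p9:
  fixes F :: "'a::{field,finite} set" and m :: nat
    and \<sigma> :: "'a^'n \<Rightarrow> 'a^'n \<Rightarrow> 'a" and U :: "('a^'n) set"
  assumes "is_subfield F"
    and "card (UNIV :: 'a set) = card F ^ m"
    and "m > 0"
    and "even (CARD('n) * m)"
    and "bilinear_form \<sigma>" and "nondegenerate_form \<sigma>"
    and "is_system F ((CARD('n) * m) div 2) U"
    and "scattered F U"
  shows "(evasive F 2 (int m - 1) U \<longleftrightarrow>
            (is_system F ((CARD('n) * m) div 2) (dual_system F m \<sigma> U) \<and>
             evasive F (int CARD('n) - 2) (int ((CARD('n) * m) div 2) - int m - 1) (dual_system F m \<sigma> U)))
       \<and> (evasive F 2 (int m - 1) U \<longleftrightarrow>
            (is_system F ((CARD('n) * m) div 2) (dual_system F m \<sigma> U) \<and>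
             cutting F (dual_system F m \<sigma> U)))"
proof -
  note ctx = refl[of "CARD('n)"] refl[of "(CARD('n) * m) div 2"] assms
  have de: "dual_system F m \<sigma> U = Rp (bb F m \<sigma>) U" by (rule dual_eq[OF ctx])
  have sys: "is_system F ((CARD('n) * m) div 2) (dual_system F m \<sigma> U)"
    unfolding de by (rule U'_system[OF ctx])
  have i1: "evasive F 2 (int m - 1) U \<Longrightarrow> evasive F (int CARD('n) - 2) (int ((CARD('n) * m) div 2) - int m - 1) (dual_system F m \<sigma> U)"
    unfolding de by (rule E12[OF ctx])
  have i2: "evasive F (int CARD('n) - 2) (int ((CARD('n) * m) div 2) - int m - 1) (dual_system F m \<sigma> U) \<Longrightarrow> evasive F 2 (int m - 1) U"
    unfolding de by (rule E21[OF ctx])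
  have i3: "evasive F 2 (int m - 1) U \<Longrightarrow> cutting F (dual_system F m \<sigma> U)"
    unfolding de by (rule E1C[OF ctx])
  have i4: "cutting F (dual_system F m \<sigma> U) \<Longrightarrow> evasive F 2 (int m - 1) U"
    unfolding de by (rule CE1[OF ctx])
  show ?thesis using sys i1 i2 i3 i4 by blast
qed

end
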